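(* Let $(\mathbf X,\mathbf Y)$ be a general correlated source which is uniformly integrable. Then \[\limsup_{n\to\infty}\frac1n H(X^n|Y^n)\le\overline H_s(\mathbf X|\mathbf Y)\le\overline H(\mathbf X|\mathbf Y).\]
   Context: A general correlated source $(\mathbf X,\mathbf Y)=\{(X^n,Y^n)\}_{n\ge1}$ is an arbitrary sequence of pairs of random variables on $\mathcal X^n\times\mathcal Y^n$, $\mathcal X,\mathcal Y$ finite or countably infinite (no structural assumptions; marginal probabilities positive). Logs base 2. $H(X^n|Y^n)$ is the conditional entropy. The source is uniformly integrable if $Z_n=\frac1n\log\frac1{P_{X^n|Y^n}(X^n|Y^n)}$ satisfies $\lim_{u\to\infty}\sup_n\sum_{z:|z|\ge u}P_{Z_n}(z)|z|=0$. $\overline H(\mathbf X|\mathbf Y)=\inf\{\alpha:\lim_n\Pr\{\frac1n\log\frac1{P_{X^n|Y^n}(X^n|Y^n)}>\alpha\}=0\}$. For $x^n$ and $\varepsilon\in(0,1]$, $\overline h^\varepsilon(x^n)=\inf\{a\in\mathbb R:\sum_{y^n:\log(1/P_{X^n|Y^n}(x^n|y^n))>a}P_{Y^n|X^n}(y^n|x^n)\le\varepsilon\}$; $\overline H_s^\varepsilon(X^n|Y^n)=\sum_{x^n}P_{X^n}(x^n)\overline h^\varepsilon(x^n)$; $\overline H_s(\mathbf X|\mathbf Y)=\lim_{\varepsilon\downarrow0}\limsup_n\frac1n\overline H_s^\varepsilon(X^n|Y^n)$. *)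

theory Defs
  imports "HOL-Probability.Probability"
begin

text \<open>A general correlated source: for each n a joint pmf P n on X^n \<times> Y^n,
  where X^n and Y^n are represented as lists of length n over the
  (finite or countably infinite) alphabets 'x and 'y.\<close>

definition gen_source :: "(nat \<Rightarrow> ('x list \<times> 'y list) pmf) \<Rightarrow> bool" where
  "gen_source P \<longleftrightarrow> (\<forall>n. set_pmf (P n) \<subseteq> {(x, y). length x = n \<and> length y = n})"

definition pX :: "(nat \<Rightarrow> ('x list \<times> 'y list) pmf) \<Rightarrow> nat \<Rightarrow> 'x list \<Rightarrow> real" where
  "pX P n x = pmf (map_pmf fst (P n)) x"

definition pY :: "(nat \<Rightarrow> ('x list \<times> 'y list) pmf) \<Rightarrow> nat \<Rightarrow> 'y list \<Rightarrow> real" where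
  "pY P n y = pmf (map_pmf snd (P n)) y"

definition condXY :: "(nat \<Rightarrow> ('x list \<times> 'y list) pmf) \<Rightarrow> nat \<Rightarrow> 'x list \<Rightarrow> 'y list \<Rightarrow> real" where
  "condXY P n x y = pmf (P n) (x, y) / pY P n y"

definition Zn :: "(nat \<Rightarrow> ('x list \<times> 'y list) pmf) \<Rightarrow> nat \<Rightarrow> 'x list \<times> 'y list \<Rightarrow> real" where
  "Zn P n xy = log 2 (1 / condXY P n (fst xy) (snd xy)) / real n"

definition unif_integrable :: "(nat \<Rightarrow> ('x list \<times> 'y list) pmf) \<Rightarrow> bool" where
  "unif_integrable P \<longleftrightarrow>
     ((\<lambda>u::real. SUP n\<in>{1..}. \<integral>\<^sup>+ xy. ennreal (\<bar>Zn P n xy\<bar> * indicator {xy. \<bar>Zn P n xy\<bar> \<ge> u} xy)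
          \<partial>measure_pmf (P n)) \<longlongrightarrow> 0) at_top"

definition cond_entropy :: "(nat \<Rightarrow> ('x list \<times> 'y list) pmf) \<Rightarrow> nat \<Rightarrow> ereal" where
  "cond_entropy P n = enn2ereal (\<integral>\<^sup>+ xy. ennreal (log 2 (1 / condXY P n (fst xy) (snd xy))) \<partial>measure_pmf (P n))"

definition spec_sup_entropy :: "(nat \<Rightarrow> ('x list \<times> 'y list) pmf) \<Rightarrow> ereal" where
  "spec_sup_entropy P = Inf (ereal ` {\<alpha>::real.
      ((\<lambda>n. measure_pmf.prob (P n) {xy. Zn P n xy > \<alpha>}) \<longlongrightarrow> 0) sequentially})"

text \<open>\<open>\<overline>h^\<epsilon>(x^n)\<close>: the tail condition
  \<open>\<Sum>_{y: log(1/P(x|y)) > a} P_{Y|X}(y|x) \<le> \<epsilon>\<close> is written as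
  \<open>P_{XY}({x}\<times>{y. log(1/P(x|y)) > a}) / P_X(x) \<le> \<epsilon>\<close>.\<close>
definition hbar :: "(nat \<Rightarrow> ('x list \<times> 'y list) pmf) \<Rightarrow> real \<Rightarrow> nat \<Rightarrow> 'x list \<Rightarrow> ereal" where
  "hbar P \<epsilon> n x = Inf (ereal ` {a::real.
      measure_pmf.prob (P n) {(x', y). x' = x \<and> log 2 (1 / condXY P n x y) > a} / pX P n x \<le> \<epsilon>})"

text \<open>For \<open>\<epsilon> < 1\<close> all
  \<open>\<overline>h^\<epsilon>(x) \<ge> 0\<close>, so the sum is taken as a nonnegative integral over P_X.\<close>
definition Hs_eps :: "(nat \<Rightarrow> ('x list \<times> 'y list) pmf) \<Rightarrow> real \<Rightarrow> nat \<Rightarrow> ereal" where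
  "Hs_eps P \<epsilon> n = enn2ereal (\<integral>\<^sup>+ x. e2ennreal (hbar P \<epsilon> n x) \<partial>measure_pmf (map_pmf fst (P n)))"

definition Hs :: "(nat \<Rightarrow> ('x list \<times> 'y list) pmf) \<Rightarrow> ereal" where
  "Hs P = Lim (at_right 0) (\<lambda>\<epsilon>. limsup (\<lambda>n. Hs_eps P \<epsilon> n / ereal (real n)))"

end

theory Submission
  imports Defs
begin

definition LL :: "(nat \<Rightarrow> ('x list \<times> 'y list) pmf) \<Rightarrow> nat \<Rightarrow> 'x list \<times> 'y list \<Rightarrow> real" where
  "LL P n xy = log 2 (1 / condXY P n (fst xy) (snd xy))"

lemma pY_ge: "pY P n (snd xy) \<ge> pmf (P n) xy"
proof -
  have "pY P n (snd xy) = measure (P n) (snd -` {snd xy})" by (simp add: pY_def pmf_map)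
  also have "\<dots> \<ge> measure (P n) {xy}"
    by (rule measure_pmf.finite_measure_mono) auto
  finally show ?thesis by (simp add: measure_pmf_single)
qed

lemma pX_ge: "pX P n (fst xy) \<ge> pmf (P n) xy"
proof -
  have "pX P n (fst xy) = measure (P n) (fst -` {fst xy})" by (simp add: pX_def pmf_map)
  also have "\<dots> \<ge> measure (P n) {xy}"
    by (rule measure_pmf.finite_measure_mono) auto
  finally show ?thesis by (simp add: measure_pmf_single)
qed

lemma supp_facts:
  assumes "xy \<in> set_pmf (P n)"
  shows "0 < condXY P n (fst xy) (snd xy)" "condXY P n (fst xy) (snd xy) \<le> 1"
    "LL P n xy \<ge> 0" "pX P n (fst xy) > 0"
proof -
  have p: "pmf (P n) xy > 0" using assms by (simp add: set_pmf_iff pmf_positive)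
  have q: "pY P n (snd xy) \<ge> pmf (P n) xy" by (rule pY_ge)
  have c: "condXY P n (fst xy) (snd xy) = pmf (P n) xy / pY P n (snd xy)"
    by (simp add: condXY_def)
  show c1: "0 < condXY P n (fst xy) (snd xy)" using p q c by simp
  show c2: "condXY P n (fst xy) (snd xy) \<le> 1" using p q c by simp
  have "1 \<le> 1 / condXY P n (fst xy) (snd xy)" using c1 c2 by (simp add: field_simps)
  then show "LL P n xy \<ge> 0" unfolding LL_def
    using c1 by (subst zero_le_log_cancel_iff) auto
  show "pX P n (fst xy) > 0" using pX_ge[of P n xy] p by simp
qed

lemma decomp:
  fixes p :: "('a::countable \<times> 'b) pmf" and F :: "'a \<times> 'b \<Rightarrow> ennreal"
  shows "(\<integral>\<^sup>+ xy. F xy \<partial>p) = (\<integral>\<^sup>+ x. (\<integral>\<^sup>+ xy. F xy * indicator {xy. fst xy = x} xy \<partial>p) \<partial>count_space UNIV)"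
proof -
  have "(\<integral>\<^sup>+ x. (\<integral>\<^sup>+ xy. F xy * indicator {xy. fst xy = x} xy \<partial>p) \<partial>count_space UNIV)
      = (\<integral>\<^sup>+ xy. (\<integral>\<^sup>+ x. F xy * indicator {xy. fst xy = x} xy \<partial>count_space UNIV) \<partial>p)"
    by (rule nn_integral_count_space_nn_integral[symmetric]) auto
  also have "\<dots> = (\<integral>\<^sup>+ xy. F xy \<partial>p)"
  proof (rule nn_integral_cong)
    fix xy :: "'a \<times> 'b"
    have "(\<integral>\<^sup>+ x. F xy * indicator {xy. fst xy = x} xy \<partial>count_space UNIV)
        = (\<integral>\<^sup>+ x. F xy * indicator {fst xy} x \<partial>count_space UNIV)"
      by (rule nn_integral_cong) (auto split: split_indicator)
    also have "\<dots> = F xy" by simp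
    finally show "(\<integral>\<^sup>+ x. F xy * indicator {xy. fst xy = x} xy \<partial>count_space UNIV) = F xy" .
  qed
  finally show ?thesis ..
qed

definition TT :: "(nat \<Rightarrow> ('x list \<times> 'y list) pmf) \<Rightarrow> nat \<Rightarrow> 'x list \<Rightarrow> real \<Rightarrow> real" where
  "TT P n x a = measure (P n) {xy. fst xy = x \<and> a < LL P n xy}"

lemma hbar_eq: "hbar P \<epsilon> n x = Inf (ereal ` {a. TT P n x a / pX P n x \<le> \<epsilon>})"
proof -
  have "{(x', y). x' = x \<and> log 2 (1 / condXY P n x y) > a} = {xy. fst xy = x \<and> a < LL P n xy}" for a
    by (auto simp: LL_def)
  then show ?thesis unfolding hbar_def TT_def by simp
qed

lemma pX_meas: "pX P n x = measure (P n) (fst -` {x})"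
  by (simp add: pX_def pmf_map)

lemma TT_nonneg_arg:
  assumes "pX P n x > 0" "\<epsilon> < 1" "TT P n x a \<le> \<epsilon> * pX P n x"
  shows "a \<ge> 0"
proof (rule ccontr)
  assume "\<not> a \<ge> 0"
  then have "fst -` {x} \<inter> set_pmf (P n) \<subseteq> {xy. fst xy = x \<and> a < LL P n xy}"
    using supp_facts(3)[of _ P n] by force
  then have "measure (P n) (fst -` {x} \<inter> set_pmf (P n)) \<le> TT P n x a"
    unfolding TT_def by (rule measure_pmf.finite_measure_mono) auto
  then have "pX P n x \<le> TT P n x a" by (simp add: measure_Int_set_pmf pX_meas)
  with assms show False by (smt (verit) mult_less_cancel_right2)
qed

definition EE :: "(nat \<Rightarrow> ('x list \<times> 'y list) pmf) \<Rightarrow> nat \<Rightarrow> 'x list \<Rightarrow> ennreal" where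
  "EE P n x = (\<integral>\<^sup>+ xy. ennreal (LL P n xy) * indicator {xy. fst xy = x} xy \<partial>P n)"

definition cc :: "(nat \<Rightarrow> ('x list \<times> 'y list) pmf) \<Rightarrow> real \<Rightarrow> nat \<Rightarrow> 'x list \<Rightarrow> real" where
  "cc P \<epsilon> n x = (enn2real (EE P n x) / pX P n x + 1) / \<epsilon>"

lemma markov:
  assumes "pX P n x > 0" "\<epsilon> > 0" "EE P n x \<noteq> \<top>"
  shows "TT P n x (cc P \<epsilon> n x) \<le> \<epsilon> * pX P n x"
proof (rule ccontr)
  define c where "c = cc P \<epsilon> n x"
  define e where "e = enn2real (EE P n x)"
  define p where "p = pX P n x"
  define S where "S = {xy. fst xy = x \<and> c < LL P n xy}"
  have e0: "e \<ge> 0" by (simp add: e_def)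
  have p0: "p > 0" using assms by (simp add: p_def)
  have cdef: "c = (e / p + 1) / \<epsilon>" by (simp add: c_def cc_def e_def p_def)
  have c0: "c > 0" unfolding cdef using e0 p0 assms(2) by (intro divide_pos_pos add_nonneg_pos) auto
  have "ennreal c * emeasure (P n) S = (\<integral>\<^sup>+ xy. ennreal c * indicator S xy \<partial>P n)"
    by (simp add: nn_integral_cmult)
  also have "\<dots> \<le> EE P n x" unfolding EE_def
    by (rule nn_integral_mono) (auto simp: S_def split: split_indicator intro: ennreal_leI)
  also have "\<dots> = ennreal e" using assms(3) by (simp add: e_def ennreal_enn2real_if)
  finally have "ennreal (c * TT P n x c) \<le> ennreal e"
    using c0 by (simp add: TT_def S_def[symmetric] measure_pmf.emeasure_eq_measure ennreal_mult)
  then have ct: "c * TT P n x c \<le> e" using e0 by simp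
  assume "\<not> TT P n x (cc P \<epsilon> n x) \<le> \<epsilon> * pX P n x"
  then have "TT P n x c > \<epsilon> * p" by (simp add: c_def p_def)
  then have "c * TT P n x c > c * (\<epsilon> * p)" using c0 by simp
  also have "c * (\<epsilon> * p) = e + p" unfolding cdef using p0 assms(2) by (simp add: field_simps)
  finally show False using ct p0 by simp
qed

lemma hbar_bounds:
  assumes "pX P n x > 0" "0 < \<epsilon>" "\<epsilon> < 1" "EE P n x \<noteq> \<top>"
  shows "0 \<le> hbar P \<epsilon> n x" "hbar P \<epsilon> n x \<le> ereal (cc P \<epsilon> n x)"
    "hbar P \<epsilon> n x = ereal (real_of_ereal (hbar P \<epsilon> n x))"
proof -
  have mem: "TT P n x a / pX P n x \<le> \<epsilon> \<longleftrightarrow> TT P n x a \<le> \<epsilon> * pX P n x" for a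
    using assms(1) by (simp add: divide_le_eq)
  show h0: "0 \<le> hbar P \<epsilon> n x" unfolding hbar_eq
    by (rule Inf_greatest) (auto simp: mem intro: TT_nonneg_arg[OF assms(1,3)])
  show h1: "hbar P \<epsilon> n x \<le> ereal (cc P \<epsilon> n x)" unfolding hbar_eq
    by (rule Inf_lower) (use markov[OF assms(1,2,4)] mem in auto)
  show "hbar P \<epsilon> n x = ereal (real_of_ereal (hbar P \<epsilon> n x))"
    using h0 h1 by (cases "hbar P \<epsilon> n x") auto
qed

definition II :: "(nat \<Rightarrow> ('x list \<times> 'y list) pmf) \<Rightarrow> nat \<Rightarrow> real \<Rightarrow> ennreal" where
  "II P n u = (\<integral>\<^sup>+ xy. ennreal (\<bar>Zn P n xy\<bar> * indicator {xy. \<bar>Zn P n xy\<bar> \<ge> u} xy) \<partial>measure_pmf (P n))"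

lemma UI_u:
  assumes "unif_integrable P" "\<eta> > 0"
  shows "\<exists>u\<ge>1. \<forall>n\<ge>1. II P n u \<le> ennreal \<eta>"
proof -
  have "((\<lambda>u::real. SUP n\<in>{1..}. II P n u) \<longlongrightarrow> 0) at_top"
    using assms(1) unfolding unif_integrable_def II_def by simp
  then have "eventually (\<lambda>u. (SUP n\<in>{1..}. II P n u) < ennreal \<eta>) at_top"
    using assms(2) by (simp add: order_tendsto_iff)
  then obtain u0 where u0: "\<And>u. u \<ge> u0 \<Longrightarrow> (SUP n\<in>{1..}. II P n u) < ennreal \<eta>"
    by (auto simp: eventually_at_top_linorder)
  define u where "u = max u0 1"
  have "II P n u \<le> ennreal \<eta>" if "n \<ge> 1" for n
  proof -
    have "II P n u \<le> (SUP n\<in>{1..}. II P n u)" using that by (intro SUP_upper) auto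
    also have "\<dots> < ennreal \<eta>" using u0[of u] by (simp add: u_def)
    finally show ?thesis by simp
  qed
  then show ?thesis by (intro exI[of _ u]) (auto simp: u_def)
qed

lemma UI_bound:
  fixes P :: "nat \<Rightarrow> ('x list \<times> 'y list) pmf"
  assumes "n \<ge> 1" "u \<ge> 0"
  shows "(\<integral>\<^sup>+ xy. ennreal (LL P n xy) * indicator B xy \<partial>P n)
     \<le> ennreal (real n) * (II P n u + ennreal u * emeasure (P n) B)"
proof -
  define S where "S = {xy. \<bar>Zn P n xy\<bar> \<ge> u}"
  have pw: "LL P n xy * indicator B xy \<le> real n * (\<bar>Zn P n xy\<bar> * indicator S xy + u * indicator B xy)" for xy
  proof -
    have z: "Zn P n xy = LL P n xy / real n" by (simp add: Zn_def LL_def)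
    have "LL P n xy \<le> real n * \<bar>Zn P n xy\<bar>" using assms(1) by (simp add: z abs_divide)
    moreover have "\<bar>Zn P n xy\<bar> < u \<Longrightarrow> LL P n xy \<le> real n * u"
      using assms(1) by (simp add: z abs_divide field_simps)
    ultimately show ?thesis using assms
      by (auto simp: S_def split: split_indicator intro: order_trans[OF _ mult_left_mono])
  qed
  have "(\<integral>\<^sup>+ xy. ennreal (LL P n xy) * indicator B xy \<partial>P n) = (\<integral>\<^sup>+ xy. ennreal (LL P n xy * indicator B xy) \<partial>P n)"
    by (simp add: nn_integral_set_ennreal)
  also have "\<dots> \<le> (\<integral>\<^sup>+ xy. ennreal (real n * (\<bar>Zn P n xy\<bar> * indicator S xy + u * indicator B xy)) \<partial>P n)"
    by (rule nn_integral_mono) (rule ennreal_leI[OF pw])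
  also have "\<dots> = (\<integral>\<^sup>+ xy. ennreal (real n) * (ennreal (\<bar>Zn P n xy\<bar> * indicator S xy) + ennreal u * indicator B xy) \<partial>P n)"
    using assms(2) by (intro nn_integral_cong) (auto simp: ennreal_mult ennreal_plus split: split_indicator)
  also have "\<dots> = ennreal (real n) * (II P n u + ennreal u * emeasure (P n) B)"
    by (simp add: nn_integral_cmult nn_integral_add II_def S_def)
  finally show ?thesis .
qed

lemma UI_delta:
  fixes P :: "nat \<Rightarrow> ('x list \<times> 'y list) pmf"
  assumes "unif_integrable P" "\<eta> > 0"
  shows "\<exists>\<delta>>0. \<forall>n\<ge>1. \<forall>B. measure (P n) B \<le> \<delta> \<longrightarrow>
     (\<integral>\<^sup>+ xy. ennreal (LL P n xy) * indicator B xy \<partial>P n) \<le> ennreal (real n * \<eta>)"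
proof -
  obtain u where u: "u \<ge> 1" "\<And>n. n \<ge> 1 \<Longrightarrow> II P n u \<le> ennreal (\<eta>/2)"
    using UI_u[OF assms(1), of "\<eta>/2"] assms(2) by auto
  define \<delta> where "\<delta> = \<eta> / (2 * u)"
  have d0: "\<delta> > 0" using u assms by (simp add: \<delta>_def)
  have "(\<integral>\<^sup>+ xy. ennreal (LL P n xy) * indicator B xy \<partial>P n) \<le> ennreal (real n * \<eta>)"
    if "n \<ge> 1" "measure (P n) B \<le> \<delta>" for n B
  proof -
    have "(\<integral>\<^sup>+ xy. ennreal (LL P n xy) * indicator B xy \<partial>P n)
       \<le> ennreal (real n) * (II P n u + ennreal u * emeasure (P n) B)"
      using UI_bound[OF that(1), of u P B] u by simp
    also have "\<dots> \<le> ennreal (real n) * (ennreal (\<eta>/2) + ennreal u * ennreal \<delta>)"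
      using u that by (intro mult_left_mono add_mono) (auto simp: measure_pmf.emeasure_eq_measure intro: ennreal_leI)
    also have "\<dots> = ennreal (real n * \<eta>)"
      using u assms(2) by (simp add: \<delta>_def ennreal_mult[symmetric] ennreal_plus[symmetric] field_simps del: ennreal_plus)
    finally show ?thesis .
  qed
  then show ?thesis using d0 by blast
qed

lemma UI_finite:
  fixes P :: "nat \<Rightarrow> ('x list \<times> 'y list) pmf"
  assumes "unif_integrable P" "n \<ge> 1"
  shows "(\<integral>\<^sup>+ xy. ennreal (LL P n xy) \<partial>P n) \<noteq> \<top>"
proof -
  obtain u where u: "u \<ge> 1" "\<And>n. n \<ge> 1 \<Longrightarrow> II P n u \<le> ennreal 1"
    using UI_u[OF assms(1), of 1] by auto
  have "(\<integral>\<^sup>+ xy. ennreal (LL P n xy) \<partial>P n) = (\<integral>\<^sup>+ xy. ennreal (LL P n xy) * indicator UNIV xy \<partial>P n)"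
    by simp
  also have "\<dots> \<le> ennreal (real n) * (II P n u + ennreal u * emeasure (P n) UNIV)"
    using UI_bound[OF assms(2), of u P UNIV] u by simp
  also have "\<dots> \<le> ennreal (real n) * (ennreal 1 + ennreal u * 1)"
    using u assms by (intro mult_left_mono add_mono) (auto simp: measure_pmf.emeasure_eq_measure)
  also have "\<dots> < \<top>" by (simp add: ennreal_mult_less_top)
  finally show ?thesis by simp
qed

lemma EE_finite:
  assumes "unif_integrable P" "n \<ge> 1"
  shows "EE P n x \<noteq> \<top>"
proof -
  have "EE P n x \<le> (\<integral>\<^sup>+ xy. ennreal (LL P n xy) \<partial>P n)" unfolding EE_def
    by (rule nn_integral_mono) (auto split: split_indicator)
  then show ?thesis using UI_finite[OF assms] by (auto simp: top_unique)
qed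

definition gg :: "(nat \<Rightarrow> ('x list \<times> 'y list) pmf) \<Rightarrow> real \<Rightarrow> ereal" where
  "gg P \<epsilon> = limsup (\<lambda>n. Hs_eps P \<epsilon> n / ereal (real n))"

lemma hbar_anti: "\<epsilon>1 \<le> \<epsilon>2 \<Longrightarrow> hbar P \<epsilon>2 n x \<le> hbar P \<epsilon>1 n x"
  unfolding hbar_def by (rule Inf_superset_mono) auto

lemma gg_anti:
  assumes "\<epsilon>1 \<le> \<epsilon>2" shows "gg P \<epsilon>2 \<le> gg P \<epsilon>1"
proof -
  have "Hs_eps P \<epsilon>2 n \<le> Hs_eps P \<epsilon>1 n" for n
  proof -
    have "(\<integral>\<^sup>+ x. e2ennreal (hbar P \<epsilon>2 n x) \<partial>measure_pmf (map_pmf fst (P n)))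
       \<le> (\<integral>\<^sup>+ x. e2ennreal (hbar P \<epsilon>1 n x) \<partial>measure_pmf (map_pmf fst (P n)))"
      by (intro nn_integral_mono e2ennreal_mono hbar_anti assms)
    then show ?thesis unfolding Hs_eps_def by (simp add: less_eq_ennreal.rep_eq[symmetric])
  qed
  then have "eventually (\<lambda>n. Hs_eps P \<epsilon>2 n / ereal (real n) \<le> Hs_eps P \<epsilon>1 n / ereal (real n)) sequentially"
    by (intro eventually_sequentiallyI[of 1]) auto
  then show ?thesis unfolding gg_def by (rule Limsup_mono)
qed

lemma Hs_eq: "Hs P = (SUP \<epsilon>\<in>{0<..<1}. gg P \<epsilon>)"
proof -
  define S where "S = (SUP \<epsilon>\<in>{0<..<1}. gg P \<epsilon>)"
  have "((\<lambda>\<epsilon>. gg P \<epsilon>) \<longlongrightarrow> S) (at_right 0)"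
  proof (rule order_tendstoI)
    fix a assume "a < S"
    then obtain \<epsilon>0 where e0: "\<epsilon>0 \<in> {0<..<1}" "a < gg P \<epsilon>0" unfolding S_def by (auto simp: less_SUP_iff)
    have "eventually (\<lambda>\<epsilon>. \<epsilon> \<in> {0<..<\<epsilon>0}) (at_right 0)"
      using e0 by (intro eventually_at_right_real) auto
    then show "eventually (\<lambda>\<epsilon>. a < gg P \<epsilon>) (at_right 0)"
    proof eventually_elim
      case (elim \<epsilon>)
      then have "gg P \<epsilon>0 \<le> gg P \<epsilon>" by (intro gg_anti) auto
      then show ?case using e0 by simp
    qed
  next
    fix a assume "S < a"
    have "eventually (\<lambda>\<epsilon>. \<epsilon> \<in> {0<..<1}) (at_right (0::real))"
      by (rule eventually_at_right_real) simp
    then show "eventually (\<lambda>\<epsilon>. gg P \<epsilon> < a) (at_right 0)"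
    proof eventually_elim
      case (elim \<epsilon>)
      then have "gg P \<epsilon> \<le> S" unfolding S_def by (intro SUP_upper)
      then show ?case using \<open>S < a\<close> by simp
    qed
  qed
  then have "Lim (at_right 0) (\<lambda>\<epsilon>. gg P \<epsilon>) = S" by (intro tendsto_Lim) auto
  then show ?thesis unfolding Hs_def gg_def[symmetric] S_def by simp
qed

lemma emeasure_decomp:
  fixes p :: "('a::countable \<times> 'b) pmf"
  shows "emeasure p B = (\<integral>\<^sup>+ x. emeasure p (B \<inter> {xy. fst xy = x}) \<partial>count_space UNIV)"
proof -
  have "emeasure p B = (\<integral>\<^sup>+ xy. indicator B xy \<partial>p)" by simp
  also have "\<dots> = (\<integral>\<^sup>+ x. (\<integral>\<^sup>+ xy. indicator B xy * indicator {xy. fst xy = x} xy \<partial>p) \<partial>count_space UNIV)"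
    by (rule decomp)
  also have "\<dots> = (\<integral>\<^sup>+ x. emeasure p (B \<inter> {xy. fst xy = x}) \<partial>count_space UNIV)"
    by (intro nn_integral_cong) (simp add: indicator_inter_arith[symmetric])
  finally show ?thesis .
qed

lemma sum_pX:
  fixes P :: "nat \<Rightarrow> ('x::countable list \<times> 'y list) pmf"
  assumes that: "c \<ge> 0"
  shows "(\<integral>\<^sup>+ x. ennreal (c * pX P n x) \<partial>count_space UNIV) = ennreal c"
proof -
  have "(\<integral>\<^sup>+ x. ennreal (c * pX P n x) \<partial>count_space UNIV)
     = ennreal c * (\<integral>\<^sup>+ x. ennreal (pmf (map_pmf fst (P n)) x) \<partial>count_space UNIV)"
    using that by (simp add: pX_def ennreal_mult nn_integral_cmult)
  also have "\<dots> = ennreal c" by (simp add: nn_integral_pmf)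
  finally show ?thesis .
qed

lemma ereal_div_aux:
  fixes z x :: ereal
  assumes "z \<le> x + ereal (real n * c)" "n \<ge> 1" "x \<ge> 0" "z \<ge> 0"
  shows "z / ereal (real n) \<le> x / ereal (real n) + ereal c"
  using assms by (cases x; cases z) (auto simp: field_simps)

lemma ineq1_n:
  fixes P :: "nat \<Rightarrow> ('x::countable list \<times> 'y::countable list) pmf"
  assumes UI: "unif_integrable P" and e: "0 < \<epsilon>" "\<epsilon> < 1" and n: "n \<ge> 1" and t: "t > 0"
    and del: "\<And>B. measure (P n) B \<le> \<epsilon> \<Longrightarrow>
       (\<integral>\<^sup>+ xy. ennreal (LL P n xy) * indicator B xy \<partial>P n) \<le> ennreal (real n * \<eta>)"
  shows "(\<integral>\<^sup>+ xy. ennreal (LL P n xy) \<partial>P n)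
     \<le> (\<integral>\<^sup>+ x. e2ennreal (hbar P \<epsilon> n x) \<partial>measure_pmf (map_pmf fst (P n))) + ennreal t + ennreal (real n * \<eta>)"
proof -
  define h where "h x = real_of_ereal (hbar P \<epsilon> n x)" for x
  have hprop: "hbar P \<epsilon> n x = ereal (h x) \<and> h x \<ge> 0" if "pX P n x > 0" for x
    using hbar_bounds[OF that e EE_finite[OF UI n]] unfolding h_def by (auto intro: real_of_ereal_pos)
  have mem: "TT P n x a / pX P n x \<le> \<epsilon> \<longleftrightarrow> TT P n x a \<le> \<epsilon> * pX P n x" if "pX P n x > 0" for x a
    using that by (simp add: divide_le_eq)
  have ex: "\<exists>a. TT P n x a \<le> \<epsilon> * pX P n x \<and> a < h x + t" if "pX P n x > 0" for x
  proof -
    have "hbar P \<epsilon> n x < ereal (h x + t)" using hprop[OF that] t by simp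
    then obtain a where "a \<in> {a. TT P n x a / pX P n x \<le> \<epsilon>}" "ereal a < ereal (h x + t)"
      unfolding hbar_eq by (auto simp: Inf_less_iff)
    then show ?thesis using mem[OF that] by auto
  qed
  define A where "A x = (SOME a. TT P n x a \<le> \<epsilon> * pX P n x \<and> a < h x + t)" for x
  have Aprop: "TT P n x (A x) \<le> \<epsilon> * pX P n x \<and> A x < h x + t" if "pX P n x > 0" for x
    unfolding A_def using someI_ex[OF ex[OF that]] .
  define B where "B = {xy. pX P n (fst xy) > 0 \<and> A (fst xy) < LL P n xy}"
  have "emeasure (P n) B = (\<integral>\<^sup>+ x. emeasure (P n) (B \<inter> {xy. fst xy = x}) \<partial>count_space UNIV)"
    by (rule emeasure_decomp)
  also have "\<dots> \<le> (\<integral>\<^sup>+ x. ennreal (\<epsilon> * pX P n x) \<partial>count_space UNIV)"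
  proof (rule nn_integral_mono)
    fix x
    show "emeasure (P n) (B \<inter> {xy. fst xy = x}) \<le> ennreal (\<epsilon> * pX P n x)"
    proof (cases "pX P n x > 0")
      case True
      have "emeasure (P n) (B \<inter> {xy. fst xy = x}) \<le> emeasure (P n) {xy. fst xy = x \<and> A x < LL P n xy}"
        by (rule emeasure_mono) (auto simp: B_def)
      also have "\<dots> = ennreal (TT P n x (A x))" by (simp add: TT_def measure_pmf.emeasure_eq_measure)
      also have "\<dots> \<le> ennreal (\<epsilon> * pX P n x)" using Aprop[OF True] by (intro ennreal_leI) auto
      finally show ?thesis .
    next
      case False
      then have "B \<inter> {xy. fst xy = x} = {}" by (auto simp: B_def)
      then show ?thesis by simp
    qed
  qed
  also have "\<dots> = ennreal \<epsilon>" using e by (intro sum_pX) auto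
  finally have "measure (P n) B \<le> \<epsilon>"
    using e by (simp add: measure_pmf.emeasure_eq_measure)
  then have Bint: "(\<integral>\<^sup>+ xy. ennreal (LL P n xy) * indicator B xy \<partial>P n) \<le> ennreal (real n * \<eta>)"
    by (rule del)
  have "(\<integral>\<^sup>+ xy. ennreal (LL P n xy) \<partial>P n)
     \<le> (\<integral>\<^sup>+ xy. e2ennreal (hbar P \<epsilon> n (fst xy)) + ennreal t + ennreal (LL P n xy) * indicator B xy \<partial>P n)"
  proof (rule nn_integral_mono_AE, rule AE_pmfI)
    fix xy assume xy: "xy \<in> set_pmf (P n)"
    have px: "pX P n (fst xy) > 0" using supp_facts(4)[of xy P n] xy by simp
    show "ennreal (LL P n xy) \<le> e2ennreal (hbar P \<epsilon> n (fst xy)) + ennreal t + ennreal (LL P n xy) * indicator B xy"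
    proof (cases "xy \<in> B")
      case True then show ?thesis by simp
    next
      case False
      then have "LL P n xy \<le> A (fst xy)" using px by (auto simp: B_def)
      then have "LL P n xy \<le> h (fst xy) + t" using Aprop[OF px] by simp
      then have "ennreal (LL P n xy) \<le> ennreal (h (fst xy)) + ennreal t"
        using hprop[OF px] t by (simp add: ennreal_plus[symmetric] ennreal_leI del: ennreal_plus)
      then show ?thesis using hprop[OF px] by (simp add: add_increasing2)
    qed
  qed
  also have "\<dots> = (\<integral>\<^sup>+ xy. e2ennreal (hbar P \<epsilon> n (fst xy)) \<partial>P n) + ennreal t
        + (\<integral>\<^sup>+ xy. ennreal (LL P n xy) * indicator B xy \<partial>P n)"
    by (simp add: nn_integral_add measure_pmf.emeasure_space_1)
  also have "\<dots> \<le> (\<integral>\<^sup>+ x. e2ennreal (hbar P \<epsilon> n x) \<partial>measure_pmf (map_pmf fst (P n))) + ennreal t + ennreal (real n * \<eta>)"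
    using Bint by (simp add: add_left_mono)
  finally show ?thesis .
qed

lemma cond_entropy_LL: "cond_entropy P n = enn2ereal (\<integral>\<^sup>+ xy. ennreal (LL P n xy) \<partial>P n)"
  by (simp add: cond_entropy_def LL_def)

lemma part1:
  fixes P :: "nat \<Rightarrow> ('x::countable list \<times> 'y::countable list) pmf"
  assumes UI: "unif_integrable P"
  shows "limsup (\<lambda>n. cond_entropy P n / ereal (real n)) \<le> Hs P"
proof (rule ereal_le_epsilon2)
  fix e :: real assume e: "0 < e"
  obtain \<delta> where d: "\<delta> > 0" "\<And>n B. n \<ge> 1 \<Longrightarrow> measure (P n) B \<le> \<delta> \<Longrightarrow>
     (\<integral>\<^sup>+ xy. ennreal (LL P n xy) * indicator B xy \<partial>P n) \<le> ennreal (real n * (e/2))"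
    using UI_delta[OF UI, of "e/2"] e by auto
  define \<epsilon> where "\<epsilon> = min \<delta> (1/2)"
  have eps: "0 < \<epsilon>" "\<epsilon> < 1" "\<epsilon> \<le> \<delta>" using d by (auto simp: \<epsilon>_def)
  have "cond_entropy P n / ereal (real n) \<le> Hs_eps P \<epsilon> n / ereal (real n) + ereal e" if n: "n \<ge> 1" for n
  proof -
    have "(\<integral>\<^sup>+ xy. ennreal (LL P n xy) \<partial>P n)
     \<le> (\<integral>\<^sup>+ x. e2ennreal (hbar P \<epsilon> n x) \<partial>measure_pmf (map_pmf fst (P n))) + ennreal (real n * (e/2)) + ennreal (real n * (e/2))"
      using n e by (intro ineq1_n[OF UI eps(1,2) n] d(2)) (auto intro: order_trans[OF _ eps(3)])
    also have "\<dots> = (\<integral>\<^sup>+ x. e2ennreal (hbar P \<epsilon> n x) \<partial>measure_pmf (map_pmf fst (P n))) + ennreal (real n * e)"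
      using e by (simp add: add.assoc ennreal_plus[symmetric] del: ennreal_plus)
    finally have le: "enn2ereal (\<integral>\<^sup>+ xy. ennreal (LL P n xy) \<partial>P n)
       \<le> enn2ereal ((\<integral>\<^sup>+ x. e2ennreal (hbar P \<epsilon> n x) \<partial>measure_pmf (map_pmf fst (P n))) + ennreal (real n * e))"
      by (simp only: less_eq_ennreal.rep_eq[symmetric])
    have "enn2ereal ((\<integral>\<^sup>+ x. e2ennreal (hbar P \<epsilon> n x) \<partial>measure_pmf (map_pmf fst (P n))) + ennreal (real n * e))
       = Hs_eps P \<epsilon> n + ereal (real n * e)"
      unfolding Hs_eps_def plus_ennreal.rep_eq using e by simp
    with le have "cond_entropy P n \<le> Hs_eps P \<epsilon> n + ereal (real n * e)"
      unfolding cond_entropy_LL by simp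
    then show ?thesis
      by (rule ereal_div_aux) (use n in \<open>auto simp: cond_entropy_LL Hs_eps_def\<close>)
  qed
  then have "eventually (\<lambda>n. cond_entropy P n / ereal (real n) \<le> Hs_eps P \<epsilon> n / ereal (real n) + ereal e) sequentially"
    by (intro eventually_sequentiallyI[of 1])
  then have "limsup (\<lambda>n. cond_entropy P n / ereal (real n)) \<le> limsup (\<lambda>n. Hs_eps P \<epsilon> n / ereal (real n) + ereal e)"
    by (rule Limsup_mono)
  also have "\<dots> \<le> gg P \<epsilon> + limsup (\<lambda>n. ereal e)"
    unfolding gg_def by (rule ereal_limsup_add_mono)
  also have "\<dots> = gg P \<epsilon> + ereal e" by (simp add: Limsup_const)
  also have "\<dots> \<le> Hs P + ereal e"
    unfolding Hs_eq using eps by (intro add_right_mono SUP_upper) auto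
  finally show "limsup (\<lambda>n. cond_entropy P n / ereal (real n)) \<le> Hs P + ereal e" .
qed

lemma ineq2_n:
  fixes P :: "nat \<Rightarrow> ('x::countable list \<times> 'y::countable list) pmf"
  assumes UI: "unif_integrable P" and e: "0 < \<epsilon>" "\<epsilon> < 1" and n: "n \<ge> 1"
    and q: "measure (P n) {xy. \<alpha> < Zn P n xy} \<le> \<epsilon> * \<rho>"
    and del: "\<And>B. measure (P n) B \<le> \<rho> \<Longrightarrow>
       (\<integral>\<^sup>+ xy. ennreal (LL P n xy) * indicator B xy \<partial>P n) \<le> ennreal (real n * \<eta>)"
  shows "(\<integral>\<^sup>+ x. e2ennreal (hbar P \<epsilon> n x) \<partial>measure_pmf (map_pmf fst (P n)))
     \<le> ennreal (real n * \<alpha>) + ennreal (1/\<epsilon>) * (ennreal (real n * \<eta>) + ennreal \<rho>)"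
proof -
  define D where "D = {x. pX P n x > 0 \<and> \<not> TT P n x (real n * \<alpha>) \<le> \<epsilon> * pX P n x}"
  have mem: "TT P n x a / pX P n x \<le> \<epsilon> \<longleftrightarrow> TT P n x a \<le> \<epsilon> * pX P n x" if "pX P n x > 0" for x a
    using that by (simp add: divide_le_eq)
  have Efin: "EE P n x \<noteq> \<top>" for x using EE_finite[OF UI n] .
  have EEe: "EE P n x = ennreal (enn2real (EE P n x))" for x
    using Efin[of x] by (simp add: ennreal_enn2real_if)
  have Dset: "{xy. \<alpha> < Zn P n xy} \<inter> {xy. fst xy = x} = {xy. fst xy = x \<and> real n * \<alpha> < LL P n xy}" for x
    using n by (auto simp: Zn_def LL_def field_simps)
  have mD: "emeasure (P n) (fst -` D) = (\<integral>\<^sup>+ x. indicator D x * ennreal (pX P n x) \<partial>count_space UNIV)"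
  proof -
    have "emeasure (P n) (fst -` D) = (\<integral>\<^sup>+ x. emeasure (P n) (fst -` D \<inter> {xy. fst xy = x}) \<partial>count_space UNIV)"
      by (rule emeasure_decomp)
    also have "\<dots> = (\<integral>\<^sup>+ x. indicator D x * ennreal (pX P n x) \<partial>count_space UNIV)"
    proof (rule nn_integral_cong)
      fix x
      show "emeasure (P n) (fst -` D \<inter> {xy. fst xy = x}) = indicator D x * ennreal (pX P n x)"
      proof (cases "x \<in> D")
        case True
        then have eq: "fst -` D \<inter> {xy. fst xy = x} = fst -` {x}" by auto
        show ?thesis unfolding eq using True by (simp add: pX_meas measure_pmf.emeasure_eq_measure)
      next
        case False
        then have eq: "fst -` D \<inter> {xy. fst xy = x} = {}" by auto
        show ?thesis unfolding eq using False by simp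
      qed
    qed
    finally show ?thesis .
  qed
  have "ennreal \<epsilon> * emeasure (P n) (fst -` D) = (\<integral>\<^sup>+ x. indicator D x * ennreal (\<epsilon> * pX P n x) \<partial>count_space UNIV)"
    unfolding mD
    by (subst nn_integral_cmult[symmetric], simp, intro nn_integral_cong)
      (use e in \<open>simp add: pX_def ennreal_mult mult.left_commute\<close>)
  also have "\<dots> \<le> (\<integral>\<^sup>+ x. emeasure (P n) ({xy. \<alpha> < Zn P n xy} \<inter> {xy. fst xy = x}) \<partial>count_space UNIV)"
  proof (rule nn_integral_mono)
    fix x
    show "indicator D x * ennreal (\<epsilon> * pX P n x) \<le> emeasure (P n) ({xy. \<alpha> < Zn P n xy} \<inter> {xy. fst xy = x})"
    proof (cases "x \<in> D")
      case True
      then have "\<epsilon> * pX P n x \<le> TT P n x (real n * \<alpha>)" by (auto simp: D_def)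
      then show ?thesis using True
        by (simp add: Dset TT_def measure_pmf.emeasure_eq_measure ennreal_leI)
    qed simp
  qed
  also have "\<dots> = emeasure (P n) {xy. \<alpha> < Zn P n xy}" by (rule emeasure_decomp[symmetric])
  also have "\<dots> \<le> ennreal (\<epsilon> * \<rho>)" using q by (simp add: measure_pmf.emeasure_eq_measure ennreal_leI)
  finally have "ennreal (\<epsilon> * measure (P n) (fst -` D)) \<le> ennreal (\<epsilon> * \<rho>)"
    using e by (simp add: measure_pmf.emeasure_eq_measure ennreal_mult[symmetric])
  moreover have "\<epsilon> * \<rho> \<ge> 0" using q measure_nonneg[of "measure_pmf (P n)" "{xy. \<alpha> < Zn P n xy}"] by linarith
  ultimately have "\<epsilon> * measure (P n) (fst -` D) \<le> \<epsilon> * \<rho>" by simp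
  then have mDr: "measure (P n) (fst -` D) \<le> \<rho>" using e by simp
  then have LD: "(\<integral>\<^sup>+ xy. ennreal (LL P n xy) * indicator (fst -` D) xy \<partial>P n) \<le> ennreal (real n * \<eta>)"
    by (rule del)
  have rho0: "\<rho> \<ge> 0" using mDr measure_nonneg[of "measure_pmf (P n)" "fst -` D"] by linarith
  have "(\<integral>\<^sup>+ x. e2ennreal (hbar P \<epsilon> n x) \<partial>measure_pmf (map_pmf fst (P n)))
     \<le> (\<integral>\<^sup>+ x. ennreal (real n * \<alpha>) + indicator D x * ennreal (cc P \<epsilon> n x) \<partial>measure_pmf (map_pmf fst (P n)))"
  proof (rule nn_integral_mono_AE, rule AE_pmfI)
    fix x assume x: "x \<in> set_pmf (map_pmf fst (P n))"
    then have px: "pX P n x > 0" by (simp add: pX_def pmf_positive)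
    show "e2ennreal (hbar P \<epsilon> n x) \<le> ennreal (real n * \<alpha>) + indicator D x * ennreal (cc P \<epsilon> n x)"
    proof (cases "x \<in> D")
      case True
      have "e2ennreal (hbar P \<epsilon> n x) \<le> e2ennreal (ereal (cc P \<epsilon> n x))"
        by (rule e2ennreal_mono) (rule hbar_bounds(2)[OF px e Efin])
      then show ?thesis using True by (simp add: add_increasing)
    next
      case False
      then have "TT P n x (real n * \<alpha>) / pX P n x \<le> \<epsilon>" using px mem[OF px] by (auto simp: D_def)
      then have "hbar P \<epsilon> n x \<le> ereal (real n * \<alpha>)" unfolding hbar_eq by (intro Inf_lower) auto
      then have "e2ennreal (hbar P \<epsilon> n x) \<le> e2ennreal (ereal (real n * \<alpha>))" by (rule e2ennreal_mono)
      then show ?thesis using False by simp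
    qed
  qed
  also have "\<dots> = ennreal (real n * \<alpha>) + (\<integral>\<^sup>+ x. indicator D x * ennreal (cc P \<epsilon> n x) \<partial>measure_pmf (map_pmf fst (P n)))"
    by (simp add: nn_integral_add measure_pmf.emeasure_space_1)
  also have "(\<integral>\<^sup>+ x. indicator D x * ennreal (cc P \<epsilon> n x) \<partial>measure_pmf (map_pmf fst (P n)))
     = (\<integral>\<^sup>+ x. ennreal (1/\<epsilon>) * (indicator D x * EE P n x + indicator D x * ennreal (pX P n x)) \<partial>count_space UNIV)"
    unfolding nn_integral_measure_pmf
  proof (rule nn_integral_cong)
    fix x
    show "ennreal (pmf (map_pmf fst (P n)) x) * (indicator D x * ennreal (cc P \<epsilon> n x))
      = ennreal (1/\<epsilon>) * (indicator D x * EE P n x + indicator D x * ennreal (pX P n x))"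
    proof (cases "x \<in> D")
      case True
      then have px: "pX P n x > 0" by (simp add: D_def)
      have "pX P n x * cc P \<epsilon> n x = 1/\<epsilon> * (enn2real (EE P n x) + pX P n x)"
        using px e by (simp add: cc_def field_simps)
      moreover have "cc P \<epsilon> n x \<ge> 0" using px e by (simp add: cc_def)
      then have "ennreal (pX P n x) * ennreal (cc P \<epsilon> n x) = ennreal (pX P n x * cc P \<epsilon> n x)"
        using px by (simp add: ennreal_mult)
      ultimately show ?thesis using True px e
        apply (subst EEe)
        apply (simp add: pX_def[symmetric] ennreal_mult[symmetric] ennreal_plus[symmetric] del: ennreal_plus)
        done
    qed simp
  qed
  also have "\<dots> = ennreal (1/\<epsilon>) * ((\<integral>\<^sup>+ x. indicator D x * EE P n x \<partial>count_space UNIV)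
       + emeasure (P n) (fst -` D))"
    unfolding mD by (simp add: nn_integral_cmult nn_integral_add)
  also have "(\<integral>\<^sup>+ x. indicator D x * EE P n x \<partial>count_space UNIV)
      = (\<integral>\<^sup>+ xy. ennreal (LL P n xy) * indicator (fst -` D) xy \<partial>P n)"
  proof -
    have "(\<integral>\<^sup>+ xy. ennreal (LL P n xy) * indicator (fst -` D) xy \<partial>P n)
       = (\<integral>\<^sup>+ x. (\<integral>\<^sup>+ xy. ennreal (LL P n xy) * indicator (fst -` D) xy * indicator {xy. fst xy = x} xy \<partial>P n) \<partial>count_space UNIV)"
      by (rule decomp)
    also have "\<dots> = (\<integral>\<^sup>+ x. indicator D x * EE P n x \<partial>count_space UNIV)"
    proof (rule nn_integral_cong)
      fix x
      have "(\<integral>\<^sup>+ xy. ennreal (LL P n xy) * indicator (fst -` D) xy * indicator {xy. fst xy = x} xy \<partial>P n)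
         = (\<integral>\<^sup>+ xy. indicator D x * (ennreal (LL P n xy) * indicator {xy. fst xy = x} xy) \<partial>P n)"
        by (rule nn_integral_cong) (auto split: split_indicator)
      also have "\<dots> = indicator D x * EE P n x" by (simp add: nn_integral_cmult EE_def)
      finally show "(\<integral>\<^sup>+ xy. ennreal (LL P n xy) * indicator (fst -` D) xy * indicator {xy. fst xy = x} xy \<partial>P n)
         = indicator D x * EE P n x" .
    qed
    finally show ?thesis by simp
  qed
  also have "ennreal (1/\<epsilon>) * ((\<integral>\<^sup>+ xy. ennreal (LL P n xy) * indicator (fst -` D) xy \<partial>P n) + emeasure (P n) (fst -` D))
     \<le> ennreal (1/\<epsilon>) * (ennreal (real n * \<eta>) + ennreal \<rho>)"
    using LD mDr by (intro mult_left_mono add_mono) (auto simp: measure_pmf.emeasure_eq_measure ennreal_leI)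
  finally show ?thesis by (simp add: add_left_mono)
qed

lemma alpha_nonneg:
  fixes P :: "nat \<Rightarrow> ('x list \<times> 'y list) pmf"
  assumes "((\<lambda>n. measure_pmf.prob (P n) {xy. Zn P n xy > \<alpha>}) \<longlongrightarrow> 0) sequentially"
  shows "\<alpha> \<ge> 0"
proof (rule ccontr)
  assume a: "\<not> \<alpha> \<ge> 0"
  have "measure_pmf.prob (P n) {xy. Zn P n xy > \<alpha>} = 1" if "n \<ge> 1" for n
  proof -
    have "set_pmf (P n) \<subseteq> {xy. Zn P n xy > \<alpha>}"
    proof
      fix xy assume "xy \<in> set_pmf (P n)"
      then have "LL P n xy \<ge> 0" by (rule supp_facts(3))
      then have "Zn P n xy \<ge> 0" by (simp add: Zn_def LL_def)
      then show "xy \<in> {xy. Zn P n xy > \<alpha>}" using a by simp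
    qed
    then show ?thesis by (simp add: measure_pmf.prob_eq_1 AE_measure_pmf_iff subset_eq)
  qed
  then have "eventually (\<lambda>n. measure_pmf.prob (P n) {xy. Zn P n xy > \<alpha>} = 1) sequentially"
    by (intro eventually_sequentiallyI[of 1])
  then have "((\<lambda>n. 1::real) \<longlongrightarrow> 0) sequentially"
    using assms by (rule Lim_transform_eventually[rotated]) 
  then show False by (simp add: LIMSEQ_const_iff)
qed

lemma part2:
  fixes P :: "nat \<Rightarrow> ('x::countable list \<times> 'y::countable list) pmf"
  assumes UI: "unif_integrable P"
  shows "Hs P \<le> spec_sup_entropy P"
  unfolding spec_sup_entropy_def Hs_eq
proof (rule Inf_greatest, safe)
  fix \<alpha> assume lim: "((\<lambda>n. measure_pmf.prob (P n) {xy. Zn P n xy > \<alpha>}) \<longlongrightarrow> 0) sequentially"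
  have a0: "\<alpha> \<ge> 0" using alpha_nonneg[OF lim] .
  show "(SUP \<epsilon>\<in>{0<..<1}. gg P \<epsilon>) \<le> ereal \<alpha>"
  proof (rule SUP_least)
    fix \<epsilon> :: real assume "\<epsilon> \<in> {0<..<1}"
    then have e: "0 < \<epsilon>" "\<epsilon> < 1" by auto
    show "gg P \<epsilon> \<le> ereal \<alpha>"
    proof (rule ereal_le_epsilon2)
      fix e :: real assume e0: "0 < e"
      define \<eta> where "\<eta> = e * \<epsilon> / 2"
      have h0: "\<eta> > 0" using e e0 by (simp add: \<eta>_def)
      obtain \<delta> where d: "\<delta> > 0" "\<And>n B. n \<ge> 1 \<Longrightarrow> measure (P n) B \<le> \<delta> \<Longrightarrow>
         (\<integral>\<^sup>+ xy. ennreal (LL P n xy) * indicator B xy \<partial>P n) \<le> ennreal (real n * \<eta>)"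
        using UI_delta[OF UI h0] by auto
      define \<rho> where "\<rho> = min \<delta> \<eta>"
      have r0: "\<rho> > 0" using d h0 by (simp add: \<rho>_def)
      have "eventually (\<lambda>n. measure_pmf.prob (P n) {xy. Zn P n xy > \<alpha>} < \<epsilon> * \<rho>) sequentially"
        using order_tendstoD(2)[OF lim, of "\<epsilon> * \<rho>"] r0 e by simp
      then have "eventually (\<lambda>n. Hs_eps P \<epsilon> n / ereal (real n) \<le> ereal (\<alpha> + e)) sequentially"
        using eventually_ge_at_top[of 1]
      proof eventually_elim
        case (elim n)
        then have n: "n \<ge> 1" by simp
        have q: "measure (P n) {xy. \<alpha> < Zn P n xy} \<le> \<epsilon> * \<rho>" using elim by simp
        have "(\<integral>\<^sup>+ x. e2ennreal (hbar P \<epsilon> n x) \<partial>measure_pmf (map_pmf fst (P n)))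
          \<le> ennreal (real n * \<alpha>) + ennreal (1/\<epsilon>) * (ennreal (real n * \<eta>) + ennreal \<rho>)"
          using ineq2_n[OF UI e n q, of \<eta>] d(2)[OF n] by (simp add: \<rho>_def)
        also have "\<dots> = ennreal (real n * \<alpha> + 1/\<epsilon> * (real n * \<eta> + \<rho>))"
        proof -
          have 1: "ennreal (real n * \<eta> + \<rho>) = ennreal (real n * \<eta>) + ennreal \<rho>"
            using h0 r0 by (intro ennreal_plus) auto
          have 2: "ennreal (1/\<epsilon> * (real n * \<eta> + \<rho>)) = ennreal (1/\<epsilon>) * ennreal (real n * \<eta> + \<rho>)"
            using e h0 r0 by (intro ennreal_mult) auto
          have 3: "ennreal (real n * \<alpha> + 1/\<epsilon> * (real n * \<eta> + \<rho>)) = ennreal (real n * \<alpha>) + ennreal (1/\<epsilon> * (real n * \<eta> + \<rho>))"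
            using e h0 r0 a0 by (intro ennreal_plus) auto
          show ?thesis unfolding 3 2 1 ..
        qed
        also have "\<dots> \<le> ennreal (real n * (\<alpha> + e))"
        proof (rule ennreal_leI)
          have "\<rho> \<le> real n * \<eta>" using n h0 by (simp add: \<rho>_def min.coboundedI2 order_trans[OF _ mult_right_mono[of 1 "real n" \<eta>]])
          then have "1/\<epsilon> * (real n * \<eta> + \<rho>) \<le> 1/\<epsilon> * (2 * (real n * \<eta>))"
            using e by (intro mult_left_mono) (auto simp: mult.commute)
          also have "\<dots> = real n * e" using e by (simp add: \<eta>_def field_simps)
          finally show "real n * \<alpha> + 1/\<epsilon> * (real n * \<eta> + \<rho>) \<le> real n * (\<alpha> + e)"
            by (simp add: algebra_simps)
        qed
        finally have "enn2ereal (\<integral>\<^sup>+ x. e2ennreal (hbar P \<epsilon> n x) \<partial>measure_pmf (map_pmf fst (P n)))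
            \<le> enn2ereal (ennreal (real n * (\<alpha> + e)))"
          by (simp only: less_eq_ennreal.rep_eq[symmetric])
        then have "Hs_eps P \<epsilon> n \<le> 0 + ereal (real n * (\<alpha> + e))"
          unfolding Hs_eps_def using a0 e0 by simp
        then have "Hs_eps P \<epsilon> n / ereal (real n) \<le> 0 / ereal (real n) + ereal (\<alpha> + e)"
          by (rule ereal_div_aux) (use n in \<open>auto simp: Hs_eps_def\<close>)
        then show ?case by simp
      qed
      then have "gg P \<epsilon> \<le> ereal (\<alpha> + e)" unfolding gg_def by (rule Limsup_bounded)
      then show "gg P \<epsilon> \<le> ereal \<alpha> + ereal e" by simp
    qed
  qed
qed


theorem theorem8:
  fixes P :: "nat \<Rightarrow> ('x::countable list \<times> 'y::countable list) pmf"
  assumes "gen_source P"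
    and "unif_integrable P"
  shows "limsup (\<lambda>n. cond_entropy P n / ereal (real n)) \<le> Hs P
         \<and> Hs P \<le> spec_sup_entropy P"
  using part1[OF assms(2)] part2[OF assms(2)] by blast

end
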